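(* Let $V\in\mathbb{R}^{k\times n}$ with columns $v_1,\ldots,v_n$ satisfy $\mathrm{rank}(V)<k$. Let $P=\mathrm{diag}(P_1,\ldots,P_n)\in\mathbb{R}^{nk\times nk}$ be block diagonal with $P_i=I_k-v_iv_i^T$. Then for any $A,B\in\mathbb{R}^{n\times n}$, every (possibly complex) eigenvalue of $AB$ is also an eigenvalue of $J=(A\otimes I_k)\,P\,(B\otimes I_k)$.
   Context: $\otimes$ is the Kronecker product; $I_k$ is the $k\times k$ identity. *)

theory Defs
  imports "HOL-Analysis.Analysis"
begin

definition cmat :: "real^'m^'m \<Rightarrow> complex^'m^'m" where
  "cmat M = (\<chi> i j. complex_of_real (M $ i $ j))"

definition complex_eigenvalue :: "real^'m^'m \<Rightarrow> complex \<Rightarrow> bool" where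
  "complex_eigenvalue M \<mu> \<longleftrightarrow> (\<exists>x::complex^'m. x \<noteq> 0 \<and> cmat M *v x = \<mu> *s x)"

text \<open>Kronecker product; the index (i,a) of the product corresponds to row
  (i-1)k + a in the usual block ordering.\<close>
definition kron :: "real^'n^'m \<Rightarrow> real^'q^'p \<Rightarrow> real^('n \<times> 'q)^('m \<times> 'p)" where
  "kron A B = (\<chi> r c. A $ fst r $ fst c * B $ snd r $ snd c)"

definition blockP :: "real^'n^'k \<Rightarrow> real^('n \<times> 'k)^('n \<times> 'k)" where
  "blockP V = (\<chi> r c. if fst r = fst c then
      (mat 1 :: real^'k^'k) $ snd r $ snd c
        - column (fst r) V $ snd r * column (fst r) V $ snd c else 0)"

end

theory Submission
  imports Defs
begin

lemma cmat_mult: "cmat (M ** N) = cmat M ** cmat N"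
  unfolding cmat_def matrix_matrix_mult_def vec_eq_iff by (simp add: of_real_sum)

lemma if_times0: "((if c then x else 0)::'a::mult_zero) * y = (if c then x * y else 0)"
  by simp

lemma of_real_mat1: "complex_of_real (r * (mat 1 :: real^'k^'k) $ a $ b) = (if a = b then complex_of_real r else 0)"
  by (simp add: mat_def)

lemma sum_if_const: "(\<Sum>b\<in>S. if c then f b else 0) = (if c then sum f S else 0)"
  by simp

lemma of_real_if0: "complex_of_real (if c then x else 0) = (if c then complex_of_real x else 0)"
  by simp

lemma sum_pair_univ:
  "(\<Sum>c\<in>(UNIV::('a::finite \<times> 'b::finite) set). f c) = (\<Sum>j\<in>UNIV. \<Sum>b\<in>UNIV. f (j,b))"
proof -
  have "(\<Sum>j\<in>UNIV. \<Sum>b\<in>UNIV. f (j,b)) = (\<Sum>(j,b)\<in>(UNIV::'a set) \<times> (UNIV::'b set). f (j,b))"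
    by (rule sum.cartesian_product)
  then show ?thesis by (simp only: UNIV_Times_UNIV case_prod_eta)
qed

lemma kron_step:
  fixes M :: "real^'n^'n" and u :: "complex^'n" and w :: "real^'k"
  shows "cmat (kron M (mat 1 :: real^'k^'k)) *v (\<chi> r. u $ fst r * of_real (w $ snd r))
       = (\<chi> r. (cmat M *v u) $ fst r * of_real (w $ snd r))"
proof -
  have "\<And>i a. (\<Sum>j\<in>UNIV. \<Sum>b\<in>UNIV. complex_of_real (M $ i $ j * (mat 1 :: real^'k^'k) $ a $ b) *
          (u $ j * complex_of_real (w $ b)))
       = (\<Sum>j\<in>UNIV. complex_of_real (M $ i $ j) * u $ j) * complex_of_real (w $ a)"
  proof -
    fix i a
    have "\<And>j. (\<Sum>b\<in>UNIV. complex_of_real (M $ i $ j * (mat 1 :: real^'k^'k) $ a $ b) *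
          (u $ j * complex_of_real (w $ b))) = complex_of_real (M $ i $ j) * u $ j * complex_of_real (w $ a)"
      by (simp only: of_real_mat1 if_times0 sum.delta sum.delta' finite UNIV_I if_True mult.assoc)
    then show "?thesis i a" by (simp add: sum_distrib_right)
  qed
  note key = this
  show ?thesis
  proof (rule vec_eq_iff[THEN iffD2], rule allI)
    fix r :: "'n \<times> 'k"
    obtain i a where r: "r = (i,a)" by fastforce
    have e: "(cmat (kron M (mat 1 :: real^'k^'k)) *v (\<chi> r. u $ fst r * of_real (w $ snd r))) $ r =
      (\<Sum>j\<in>UNIV. \<Sum>b\<in>UNIV. complex_of_real (M $ i $ j * (mat 1 :: real^'k^'k) $ a $ b) *
          (u $ j * complex_of_real (w $ b)))"
      unfolding r matrix_vector_mult_def cmat_def kron_def sum_pair_univ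
      by (simp only: vec_lambda_beta fst_conv snd_conv)
    have f: "(\<chi> r. (cmat M *v u) $ fst r * of_real (w $ snd r)) $ r
       = (\<Sum>j\<in>UNIV. complex_of_real (M $ i $ j) * u $ j) * complex_of_real (w $ a)"
      unfolding r matrix_vector_mult_def cmat_def
      by (simp only: vec_lambda_beta fst_conv snd_conv)
    show "(cmat (kron M (mat 1 :: real^'k^'k)) *v (\<chi> r. u $ fst r * of_real (w $ snd r))) $ r =
       (\<chi> r. (cmat M *v u) $ fst r * of_real (w $ snd r)) $ r"
      unfolding e f key ..
  qed
qed

lemma blockP_step:
  fixes V :: "real^'n^'k" and u :: "complex^'n" and w :: "real^'k"
  assumes w: "\<And>i. (\<Sum>a\<in>UNIV. V $ a $ i * w $ a) = 0"
  shows "cmat (blockP V) *v (\<chi> r. u $ fst r * of_real (w $ snd r))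
       = (\<chi> r. u $ fst r * of_real (w $ snd r))"
proof -
  have "\<And>i a. (\<Sum>j\<in>UNIV. \<Sum>b\<in>UNIV. complex_of_real (if i = j then (mat 1 :: real^'k^'k) $ a $ b
           - V $ a $ i * V $ b $ i else 0) * (u $ j * complex_of_real (w $ b)))
       = u $ i * complex_of_real (w $ a)"
  proof -
    fix i a
    have "(\<Sum>j\<in>UNIV. \<Sum>b\<in>UNIV. complex_of_real (if i = j then (mat 1 :: real^'k^'k) $ a $ b
           - V $ a $ i * V $ b $ i else 0) * (u $ j * complex_of_real (w $ b)))
       = (\<Sum>b\<in>UNIV. complex_of_real ((mat 1 :: real^'k^'k) $ a $ b
           - V $ a $ i * V $ b $ i) * (u $ i * complex_of_real (w $ b)))"
      by (simp only: of_real_if0 if_times0 sum.delta' sum_if_const sum.delta finite UNIV_I if_True)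
    also have "\<dots> = u $ i * complex_of_real (\<Sum>b\<in>UNIV. ((mat 1 :: real^'k^'k) $ a $ b
           - V $ a $ i * V $ b $ i) * w $ b)"
      by (simp add: sum_distrib_left mult_ac)
    also have "(\<Sum>b\<in>UNIV. ((mat 1 :: real^'k^'k) $ a $ b - V $ a $ i * V $ b $ i) * w $ b)
         = w $ a - V $ a $ i * (\<Sum>b\<in>UNIV. V $ b $ i * w $ b)"
    proof -
      have m: "(\<Sum>b\<in>UNIV. (mat 1 :: real^'k^'k) $ a $ b * w $ b) = w $ a"
        by (simp add: mat_def if_times0)
      have "(\<Sum>b\<in>UNIV. ((mat 1 :: real^'k^'k) $ a $ b - V $ a $ i * V $ b $ i) * w $ b)
          = (\<Sum>b\<in>UNIV. (mat 1 :: real^'k^'k) $ a $ b * w $ b) - (\<Sum>b\<in>UNIV. V $ a $ i * (V $ b $ i * w $ b))"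
        by (simp only: left_diff_distrib sum_subtractf mult.assoc)
      then show ?thesis by (simp only: m sum_distrib_left[symmetric])
    qed
    also have "\<dots> = w $ a" using w by simp
    finally show "?thesis i a" .
  qed
  note key = this
  show ?thesis
  proof (rule vec_eq_iff[THEN iffD2], rule allI)
    fix r :: "'n \<times> 'k"
    obtain i a where r: "r = (i,a)" by fastforce
    have e: "(cmat (blockP V) *v (\<chi> r. u $ fst r * of_real (w $ snd r))) $ r =
      (\<Sum>j\<in>UNIV. \<Sum>b\<in>UNIV. complex_of_real (if i = j then (mat 1 :: real^'k^'k) $ a $ b
           - V $ a $ i * V $ b $ i else 0) * (u $ j * complex_of_real (w $ b)))"
      unfolding r matrix_vector_mult_def cmat_def blockP_def column_def sum_pair_univ
      by (simp only: vec_lambda_beta fst_conv snd_conv)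
    show "(cmat (blockP V) *v (\<chi> r. u $ fst r * of_real (w $ snd r))) $ r =
      (\<chi> r. u $ fst r * of_real (w $ snd r)) $ r"
      unfolding e key by (simp add: r)
  qed
qed

theorem lemma8:
  fixes V :: "real^'n^'k" and A B :: "real^'n^'n" and \<mu> :: complex
  assumes "rank V < CARD('k)"
    and "complex_eigenvalue (A ** B) \<mu>"
  shows "complex_eigenvalue
           (kron A (mat 1 :: real^'k^'k) ** blockP V ** kron B (mat 1 :: real^'k^'k)) \<mu>"
proof -
  have "rank (transpose V) \<noteq> CARD('k)" using assms(1) rank_transpose[of V] by linarith
  then obtain w :: "real^'k" where w0: "w \<noteq> 0" and tw: "transpose V *v w = 0"
    using matrix_nonfull_linear_equations_eq[THEN iffD2] by blast
  have w: "\<And>i. (\<Sum>a\<in>UNIV. V $ a $ i * w $ a) = 0"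
  proof -
    fix i
    have "(transpose V *v w) $ i = 0" using tw by simp
    then show "?thesis i" by (simp add: matrix_vector_mult_def transpose_def)
  qed
  obtain x where x0: "x \<noteq> 0" and ex: "cmat (A ** B) *v x = \<mu> *s x"
    using assms(2) unfolding complex_eigenvalue_def by blast
  obtain i where xi: "x $ i \<noteq> 0" using x0 by (auto simp: vec_eq_iff)
  obtain a where wa: "w $ a \<noteq> 0" using w0 by (auto simp: vec_eq_iff)
  define y :: "complex^('n \<times> 'k)" where "y = (\<chi> r. x $ fst r * of_real (w $ snd r))"
  have y0: "y \<noteq> 0"
  proof
    assume "y = 0"
    then have "y $ (i,a) = 0" by simp
    then show False using xi wa by (simp add: y_def)
  qed
  have "cmat (kron A (mat 1 :: real^'k^'k) ** blockP V ** kron B (mat 1 :: real^'k^'k)) *v y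
      = cmat (kron A (mat 1 :: real^'k^'k)) *v (cmat (blockP V) *v
          (cmat (kron B (mat 1 :: real^'k^'k)) *v y))"
    by (simp only: cmat_mult matrix_vector_mul_assoc matrix_mul_assoc)
  also have "\<dots> = (\<chi> r. (cmat A *v (cmat B *v x)) $ fst r * of_real (w $ snd r))"
    unfolding y_def kron_step blockP_step[OF w] ..
  also have "\<dots> = \<mu> *s y"
  proof -
    have "cmat A *v (cmat B *v x) = \<mu> *s x"
      using ex by (simp only: cmat_mult matrix_vector_mul_assoc)
    then show ?thesis unfolding y_def by (simp add: vec_eq_iff mult.assoc)
  qed
  finally show ?thesis unfolding complex_eigenvalue_def using y0 by blast
qed

end
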